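(* Let $K$ be a compact Hausdorff space without isolated points and let $U$ be a nonempty open subset of $Q_K$. Then there is a nonempty open set $V\subset K$ such that for every $v\in V$ there exists an ultrafilter $\mathfrak U_v$ on $K$ containing no first category set, with $\lim\mathfrak U_v=v$ and $\mathfrak U_v\text{-}\lim\in U$.
   Context: For a compact Hausdorff space $K$ without isolated points: $\ell_\infty(K)$ is the space of bounded real functions on $K$ with the sup norm; $m(K)=\{f\in\ell_\infty(K): \mathrm{supp}(f)\text{ is a first category set in }K\}$; $m_0(K)=\ell_\infty(K)/m(K)$ with the quotient norm, a real commutative $C^*$-algebra. $Q_K$ denotes the set of nonzero real algebra homomorphisms $m_0(K)\to\mathbb R$, with the weak$^*$ topology, so that $m_0(K)\cong C(Q_K)$. For an ultrafilter $\mathfrak U$ on $K$ containing no first category set, $\lim\mathfrak U$ is the point of $K$ to which $\mathfrak U$ converges, and $\mathfrak U\text{-}\lim\in Q_K$ is the homomorphism $[f]\mapsto\lim_{\mathfrak U}f$; every element of $Q_K$ is of this form. *)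

theory Defs
  imports "HOL-Analysis.Analysis"
begin

definition nowhere_dense :: "'a::topological_space set \<Rightarrow> bool" where
  "nowhere_dense A \<longleftrightarrow> interior (closure A) = {}"

definition first_category :: "'a::topological_space set \<Rightarrow> bool" where
  "first_category A \<longleftrightarrow>
     (\<exists>N :: nat \<Rightarrow> 'a set. (\<forall>n. nowhere_dense (N n)) \<and> A \<subseteq> (\<Union>n. N n))"

definition bdd_fun :: "('a \<Rightarrow> real) \<Rightarrow> bool" where
  "bdd_fun f \<longleftrightarrow> bounded (range f)"

definition supp :: "('a \<Rightarrow> real) \<Rightarrow> 'a set" where
  "supp f = {x. f x \<noteq> 0}"

definition mK :: "('a::topological_space \<Rightarrow> real) set" where
  "mK = {f. bdd_fun f \<and> first_category (supp f)}"

text \<open>\<open>Q_K\<close>: nonzero real algebra homomorphisms \<open>m\<^sub>0(K) = \<ell>\<^sub>\<infinity>(K)/m(K) \<rightarrow> \<real>\<close>,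
  represented by their composition with the quotient map \<open>\<ell>\<^sub>\<infinity>(K) \<rightarrow> m\<^sub>0(K)\<close>, i.e.
  as algebra homomorphisms on \<open>\<ell>\<^sub>\<infinity>(K)\<close> vanishing on \<open>m(K)\<close>
  (and normalised to be 0 outside \<open>\<ell>\<^sub>\<infinity>(K)\<close>).\<close>
definition QK :: "(('a::topological_space \<Rightarrow> real) \<Rightarrow> real) set" where
  "QK = {\<phi>.
      (\<forall>f g. bdd_fun f \<longrightarrow> bdd_fun g \<longrightarrow> \<phi> (\<lambda>x. f x + g x) = \<phi> f + \<phi> g) \<and>
      (\<forall>f c. bdd_fun f \<longrightarrow> \<phi> (\<lambda>x. c * f x) = c * \<phi> f) \<and>
      (\<forall>f g. bdd_fun f \<longrightarrow> bdd_fun g \<longrightarrow> \<phi> (\<lambda>x. f x * g x) = \<phi> f * \<phi> g) \<and>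
      (\<forall>f \<in> mK. \<phi> f = 0) \<and>
      (\<forall>f. \<not> bdd_fun f \<longrightarrow> \<phi> f = 0) \<and>
      (\<exists>f. bdd_fun f \<and> \<phi> f \<noteq> 0)}"

text \<open>Open sets of \<open>Q_K\<close> in the weak* topology (generated by evaluations at elements of \<open>m\<^sub>0(K)\<close>).\<close>
definition QK_open :: "(('a::topological_space \<Rightarrow> real) \<Rightarrow> real) set \<Rightarrow> bool" where
  "QK_open U \<longleftrightarrow> U \<subseteq> QK \<and>
     (\<forall>\<phi>\<in>U. \<exists>F \<epsilon>. finite F \<and> (\<forall>f\<in>F. bdd_fun f) \<and> \<epsilon> > 0 \<and>
        {\<psi>\<in>QK. \<forall>f\<in>F. \<bar>\<psi> f - \<phi> f\<bar> < \<epsilon>} \<subseteq> U)"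

definition is_ultrafilter :: "'a filter \<Rightarrow> bool" where
  "is_ultrafilter F \<longleftrightarrow> F \<noteq> bot \<and>
     (\<forall>A. eventually (\<lambda>x. x \<in> A) F \<or> eventually (\<lambda>x. x \<notin> A) F)"

definition ulim :: "'a filter \<Rightarrow> ('a \<Rightarrow> real) \<Rightarrow> real" where
  "ulim F = (\<lambda>f. if bdd_fun f then Lim F f else 0)"

end

theory Submission
  imports Defs
begin


lemma fc_empty: "first_category ({}::'a::topological_space set)"
  unfolding first_category_def nowhere_dense_def
  by (rule exI[of _ "\<lambda>n. {}"]) simp

lemma fc_subset: "first_category B \<Longrightarrow> A \<subseteq> B \<Longrightarrow> first_category A"
  unfolding first_category_def by blast

lemma fc_Un:
  assumes "first_category A" "first_category B"
  shows "first_category (A \<union> B)"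
proof -
  obtain N1 :: "nat \<Rightarrow> _" where N1: "\<forall>n. nowhere_dense (N1 n)" "A \<subseteq> (\<Union>n. N1 n)"
    using assms(1) unfolding first_category_def by blast
  obtain N2 :: "nat \<Rightarrow> _" where N2: "\<forall>n. nowhere_dense (N2 n)" "B \<subseteq> (\<Union>n. N2 n)"
    using assms(2) unfolding first_category_def by blast
  define N where "N n = (if even n then N1 (n div 2) else N2 (n div 2))" for n
  have "\<forall>n. nowhere_dense (N n)" using N1 N2 by (simp add: N_def)
  moreover have "A \<union> B \<subseteq> (\<Union>n. N n)"
  proof
    fix x assume "x \<in> A \<union> B"
    then show "x \<in> (\<Union>n. N n)"
    proof
      assume "x \<in> A" then obtain k where "x \<in> N1 k" using N1 by blast
      then have "x \<in> N (2*k)" by (simp add: N_def)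
      then show ?thesis by blast
    next
      assume "x \<in> B" then obtain k where "x \<in> N2 k" using N2 by blast
      then have "x \<in> N (2*k+1)" by (simp add: N_def)
      then show ?thesis by blast
    qed
  qed
  ultimately show ?thesis unfolding first_category_def by blast
qed

definition comeager :: "'a::topological_space filter" where
  "comeager = Abs_filter (\<lambda>P. first_category {x. \<not> P x})"

lemma eventually_comeager: "eventually P comeager \<longleftrightarrow> first_category {x. \<not> P x}"
  unfolding comeager_def
proof (rule eventually_Abs_filter, rule is_filter.intro)
  show "first_category {x. \<not> True}" using fc_empty by simp
next
  fix P Q :: "'a \<Rightarrow> bool"
  assume "first_category {x. \<not> P x}" "first_category {x. \<not> Q x}"
  then have "first_category ({x. \<not> P x} \<union> {x. \<not> Q x})" by (rule fc_Un)
  then show "first_category {x. \<not> (P x \<and> Q x)}" by (rule fc_subset) auto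
next
  fix P Q :: "'a \<Rightarrow> bool"
  assume a: "\<forall>x. P x \<longrightarrow> Q x" and b: "first_category {x. \<not> P x}"
  show "first_category {x. \<not> Q x}" by (rule fc_subset[OF b]) (use a in auto)
qed

lemma fc_disjoint_union:
  fixes S :: "'a::topological_space set"
  assumes pw: "pairwise disjnt \<O>" and H: "\<forall>B\<in>\<O>. open B \<and> first_category (S \<inter> B)"
  shows "first_category (S \<inter> \<Union>\<O>)"
proof -
  have "\<forall>B\<in>\<O>. \<exists>N::nat \<Rightarrow> _. (\<forall>n. nowhere_dense (N n)) \<and> S \<inter> B \<subseteq> (\<Union>n. N n)"
    using H unfolding first_category_def by blast
  then obtain N :: "_ \<Rightarrow> nat \<Rightarrow> _" where N: "\<And>B n. B \<in> \<O> \<Longrightarrow> nowhere_dense (N B n)"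
    "\<And>B. B \<in> \<O> \<Longrightarrow> S \<inter> B \<subseteq> (\<Union>n. N B n)"
    by metis
  define M where "M n = (\<Union>B\<in>\<O>. N B n \<inter> B)" for n
  have cov: "S \<inter> \<Union>\<O> \<subseteq> (\<Union>n. M n)"
  proof
    fix x assume "x \<in> S \<inter> \<Union>\<O>"
    then obtain B where "B \<in> \<O>" "x \<in> S \<inter> B" by blast
    then obtain n where "x \<in> N B n" using N(2) by blast
    then show "x \<in> (\<Union>n. M n)" using \<open>B \<in> \<O>\<close> \<open>x \<in> S \<inter> B\<close> unfolding M_def by blast
  qed
  have nd: "nowhere_dense (M n)" for n
  proof -
    define I where "I = interior (closure (M n))"
    have IO: "I \<inter> B = {}" if B: "B \<in> \<O>" for B
    proof -
      have "I \<inter> B \<subseteq> B \<inter> closure (M n)" using interior_subset[of "closure (M n)"]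
        unfolding I_def by blast
      also have "\<dots> \<subseteq> closure (B \<inter> M n)" using H B by (simp add: open_Int_closure_subset)
      also have "B \<inter> M n \<subseteq> N B n"
      proof
        fix y assume "y \<in> B \<inter> M n"
        then obtain B' where "B' \<in> \<O>" "y \<in> N B' n" "y \<in> B'" "y \<in> B" unfolding M_def by blast
        then have "B' = B" using pw B unfolding pairwise_def disjnt_def by blast
        then show "y \<in> N B n" using \<open>y \<in> N B' n\<close> by simp
      qed
      then have "closure (B \<inter> M n) \<subseteq> closure (N B n)" by (rule closure_mono)
      finally have "I \<inter> B \<subseteq> closure (N B n)" .
      moreover have "open (I \<inter> B)" using H B unfolding I_def by auto
      ultimately have "I \<inter> B \<subseteq> interior (closure (N B n))" by (rule interior_maximal)
      then show ?thesis using N(1)[OF B, of n] unfolding nowhere_dense_def by blast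
    qed
    have "I = {}"
    proof (rule ccontr)
      assume "I \<noteq> {}"
      have "open I" unfolding I_def by simp
      have "I \<subseteq> closure (M n)" unfolding I_def by (rule interior_subset)
      then have "I \<inter> closure (M n) \<noteq> {}" using \<open>I \<noteq> {}\<close> by blast
      then have "I \<inter> M n \<noteq> {}" using open_Int_closure_eq_empty[OF \<open>open I\<close>] by blast
      then obtain y B where "y \<in> I" "B \<in> \<O>" "y \<in> B" unfolding M_def by blast
      then show False using IO by blast
    qed
    then show ?thesis unfolding nowhere_dense_def I_def .
  qed
  show ?thesis unfolding first_category_def using cov nd by blast
qed

lemma banach:
  fixes S :: "'a::topological_space set"
  assumes H: "\<forall>V. open V \<and> V \<noteq> {} \<longrightarrow> (\<exists>W. open W \<and> W \<noteq> {} \<and> W \<subseteq> V \<and> first_category (S \<inter> W))"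
  shows "first_category S"
proof -
  define \<A> where "\<A> = {\<O>. \<O> \<subseteq> {B. open B \<and> B \<noteq> {} \<and> first_category (S \<inter> B)} \<and> pairwise disjnt \<O>}"
  have "\<exists>M\<in>\<A>. \<forall>X\<in>\<A>. M \<subseteq> X \<longrightarrow> X = M"
  proof (rule subset_Zorn')
    fix C assume C: "subset.chain \<A> C"
    show "\<Union>C \<in> \<A>"
      unfolding \<A>_def
    proof (intro CollectI conjI)
      show "\<Union>C \<subseteq> {B. open B \<and> B \<noteq> {} \<and> first_category (S \<inter> B)}"
        using C unfolding subset.chain_def \<A>_def by blast
      show "pairwise disjnt (\<Union>C)"
        unfolding pairwise_def
      proof (intro ballI impI)
        fix x y assume "x \<in> \<Union>C" "y \<in> \<Union>C" "x \<noteq> y"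
        then obtain X Y where "X \<in> C" "Y \<in> C" "x \<in> X" "y \<in> Y" by blast
        then have "X \<subseteq> Y \<or> Y \<subseteq> X" using C unfolding subset.chain_def by blast
        moreover have "X \<in> \<A>" "Y \<in> \<A>"
          using C \<open>X \<in> C\<close> \<open>Y \<in> C\<close> unfolding subset.chain_def by auto
        then have "pairwise disjnt X" "pairwise disjnt Y" unfolding \<A>_def by simp_all
        ultimately show "disjnt x y" using \<open>x \<in> X\<close> \<open>y \<in> Y\<close> \<open>x \<noteq> y\<close>
          by (metis pairwise_def subsetD)
      qed
    qed
  qed
  then obtain M where M: "M \<in> \<A>" and max: "\<And>X. X \<in> \<A> \<Longrightarrow> M \<subseteq> X \<Longrightarrow> X = M" by blast
  have Mpw: "pairwise disjnt M" and Msub0: "M \<subseteq> {B. open B \<and> B \<noteq> {} \<and> first_category (S \<inter> B)}"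
    using M unfolding \<A>_def by simp_all
  have Msub: "\<forall>B\<in>M. open B \<and> B \<noteq> {} \<and> first_category (S \<inter> B)"
    using Msub0 by auto
  have openU: "open (\<Union>M)" using Msub by auto
  have intE: "interior (- \<Union>M) = {}"
  proof (rule ccontr)
    assume ne: "interior (- \<Union>M) \<noteq> {}"
    obtain W where W: "open W" "W \<noteq> {}" "W \<subseteq> interior (- \<Union>M)" "first_category (S \<inter> W)"
      using H[rule_format, OF conjI[OF open_interior ne]] by auto
    have Wd: "W \<inter> \<Union>M = {}" using W(3) interior_subset[of "- \<Union>M"] by blast
    have "insert W M \<in> \<A>"
      unfolding \<A>_def
    proof (intro CollectI conjI)
      show "insert W M \<subseteq> {B. open B \<and> B \<noteq> {} \<and> first_category (S \<inter> B)}" using W Msub0 by auto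
      show "pairwise disjnt (insert W M)"
        using Mpw Wd by (auto simp: pairwise_insert disjnt_def)
    qed
    then have "insert W M = M" using max[of "insert W M"] by auto
    then have "W \<in> M" by blast
    then show False using Wd W(2) by blast
  qed
  have "first_category (- \<Union>M)"
    unfolding first_category_def
  proof (intro exI conjI)
    show "\<forall>n. nowhere_dense ((\<lambda>n. - \<Union>M) n)"
      unfolding nowhere_dense_def using openU intE by (simp add: closure_closed closed_def)
    show "- \<Union>M \<subseteq> (\<Union>n. (\<lambda>n. - \<Union>M) n)" by blast
  qed
  moreover have "first_category (S \<inter> \<Union>M)"
    using fc_disjoint_union[OF Mpw] Msub by simp
  ultimately have "first_category ((S \<inter> \<Union>M) \<union> - \<Union>M)" by (intro fc_Un)
  moreover have "S \<subseteq> (S \<inter> \<Union>M) \<union> - \<Union>M" by auto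
  ultimately show ?thesis by (rule fc_subset)
qed



lemma max_filter_ultra:
  assumes "F \<noteq> bot"
  assumes max: "\<And>G. G \<noteq> bot \<Longrightarrow> G \<le> F \<Longrightarrow> F = G"
  shows "is_ultrafilter F"
  unfolding is_ultrafilter_def
proof (intro conjI allI)
  show "F \<noteq> bot" by fact
  fix A :: "'a set"
  show "eventually (\<lambda>x. x \<in> A) F \<or> eventually (\<lambda>x. x \<notin> A) F"
  proof (rule disjCI)
    assume "\<not> eventually (\<lambda>x. x \<notin> A) F"
    then have "inf F (principal A) \<noteq> bot"
      by (simp add: trivial_limit_def eventually_inf_principal)
    then have F: "F = inf F (principal A)"
      by (rule max) simp
    show "eventually (\<lambda>x. x \<in> A) F"
      by (subst F) (simp add: eventually_inf_principal)
  qed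
qed

lemma ex_ultra:
  fixes F :: "'a filter"
  assumes F: "F \<noteq> bot"
  shows "\<exists>U\<le>F. is_ultrafilter U"
proof -
  let ?X = "{G. G \<noteq> bot \<and> G \<le> F}"
  let ?R = "{(b, a). a \<noteq> bot \<and> a \<le> b \<and> b \<le> F}"
  have bot_notin_R: "c \<in> Chains ?R \<Longrightarrow> bot \<notin> c" for c
    by (auto simp: Chains_def)
  have [simp]: "Field ?R = ?X"
    by (auto simp: Field_def bot_unique)
  have "\<exists>m\<in>Field ?R. \<forall>a\<in>Field ?R. (m, a) \<in> ?R \<longrightarrow> a = m" (is "\<exists>m\<in>?A. ?B m")
  proof (rule Zorns_po_lemma)
    show "Partial_order ?R"
      by (auto simp: partial_order_on_def preorder_on_def
          antisym_def refl_on_def trans_def Field_def bot_unique)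
    show "\<exists>u\<in>Field ?R. \<forall>a\<in>C. (a, u) \<in> ?R" if C: "C \<in> Chains ?R" for C
    proof (simp, intro exI conjI ballI)
      have Inf_C: "Inf C \<noteq> bot" "Inf C \<le> F" if "C \<noteq> {}"
      proof -
        from C that have "Inf C = bot \<longleftrightarrow> (\<exists>x\<in>C. x = bot)"
          unfolding trivial_limit_def by (intro eventually_Inf_base) (auto simp: Chains_def)
        with C show "Inf C \<noteq> bot"
          by (simp add: bot_notin_R)
        from that obtain x where "x \<in> C" by auto
        with C show "Inf C \<le> F"
          by (auto intro!: Inf_lower2[of x] simp: Chains_def)
      qed
      then have [simp]: "inf F (Inf C) = (if C = {} then F else Inf C)"
        using C by (auto simp add: inf_absorb2)
      from C show "inf F (Inf C) \<noteq> bot"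
        by (simp add: F Inf_C)
      from C show "inf F (Inf C) \<le> F"
        by (simp add: Chains_def Inf_C F)
      with C show "inf F (Inf C) \<le> x" "x \<le> F" if "x \<in> C" for x
        using that  by (auto intro: Inf_lower simp: Chains_def)
    qed
  qed
  then obtain U where U: "U \<in> ?A" "?B U" ..
  show ?thesis
  proof
    from U show "U \<le> F \<and> is_ultrafilter U"
      by (auto intro!: max_filter_ultra)
  qed
qed

lemma bdd_fun_iff: "bdd_fun f \<longleftrightarrow> (\<exists>B. \<forall>x. \<bar>f x\<bar> \<le> B)"
  unfolding bdd_fun_def bounded_iff by auto

lemma bdd_add: "bdd_fun f \<Longrightarrow> bdd_fun g \<Longrightarrow> bdd_fun (\<lambda>x. f x + g x)"
  unfolding bdd_fun_iff
proof (elim exE)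
  fix B1 B2 assume "\<forall>x. \<bar>f x\<bar> \<le> B1" "\<forall>x. \<bar>g x\<bar> \<le> B2"
  then have "\<forall>x. \<bar>f x + g x\<bar> \<le> B1 + B2"
    by (metis abs_triangle_ineq add_mono order_trans)
  then show "\<exists>B. \<forall>x. \<bar>f x + g x\<bar> \<le> B" by blast
qed

lemma bdd_mult: "bdd_fun f \<Longrightarrow> bdd_fun g \<Longrightarrow> bdd_fun (\<lambda>x. f x * g x)"
  unfolding bdd_fun_iff
proof (elim exE)
  fix B1 B2 assume a: "\<forall>x. \<bar>f x\<bar> \<le> B1" and b: "\<forall>x. \<bar>g x\<bar> \<le> B2"
  have "\<bar>f x * g x\<bar> \<le> B1 * B2" for x
  proof -
    have "\<bar>f x * g x\<bar> = \<bar>f x\<bar> * \<bar>g x\<bar>" by (rule abs_mult)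
    also have "\<dots> \<le> B1 * B2" using a b by (intro mult_mono) (auto intro: order_trans[OF abs_ge_zero])
    finally show ?thesis .
  qed
  then show "\<exists>B. \<forall>x. \<bar>f x * g x\<bar> \<le> B" by blast
qed

lemma bdd_const: "bdd_fun (\<lambda>x. c)"
  unfolding bdd_fun_iff by auto

lemma bdd_scale: assumes "bdd_fun f" shows "bdd_fun (\<lambda>x. c * f x)"
  using bdd_mult[OF bdd_const[of c] assms] by simp

lemma ultra_tendsto:
  fixes f :: "'a \<Rightarrow> real"
  assumes U: "is_ultrafilter U" and f: "bdd_fun f"
  shows "\<exists>c. (f \<longlongrightarrow> c) U"
proof -
  obtain B where B: "\<forall>x. \<bar>f x\<bar> \<le> B" using f unfolding bdd_fun_iff by blast
  define F' where "F' = filtermap f U"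
  have Ub: "U \<noteq> bot" using U unfolding is_ultrafilter_def by blast
  have "F' \<noteq> bot" unfolding F'_def using Ub by (simp add: filtermap_bot_iff)
  moreover have "eventually (\<lambda>y. y \<in> {-B..B}) F'"
    unfolding F'_def eventually_filtermap
  proof (intro always_eventually allI)
    fix x have "\<bar>f x\<bar> \<le> B" using B by blast
    then show "f x \<in> {-B..B}" by (auto simp: abs_le_iff)
  qed
  ultimately obtain c where c: "inf (nhds c) F' \<noteq> bot"
    using compact_Icc[of "-B" B] unfolding compact_filter by blast
  have "(f \<longlongrightarrow> c) U"
    unfolding tendsto_def
  proof (intro allI impI)
    fix S :: "real set" assume S: "open S" "c \<in> S"
    show "eventually (\<lambda>x. f x \<in> S) U"
    proof (rule ccontr)
      assume "\<not> eventually (\<lambda>x. f x \<in> S) U"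
      moreover have "eventually (\<lambda>x. x \<in> f -` S) U \<or> eventually (\<lambda>x. x \<notin> f -` S) U"
        using U unfolding is_ultrafilter_def by blast
      ultimately have "eventually (\<lambda>x. f x \<notin> S) U" by simp
      then have e1: "eventually (\<lambda>y. y \<notin> S) F'" unfolding F'_def eventually_filtermap .
      have e2: "eventually (\<lambda>y. y \<in> S) (nhds c)" using S eventually_nhds by blast
      have "eventually (\<lambda>y. False) (inf (nhds c) F')"
        unfolding eventually_inf using e1 e2 by blast
      then show False using c by (simp add: trivial_limit_def)
    qed
  qed
  then show ?thesis by blast
qed

lemma ulim_eq: "is_ultrafilter U \<Longrightarrow> bdd_fun f \<Longrightarrow> (f \<longlongrightarrow> c) U \<Longrightarrow> ulim U f = c"
  unfolding ulim_def is_ultrafilter_def by (simp add: tendsto_Lim)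

lemma ulim_QK:
  fixes U :: "'a::topological_space filter"
  assumes U: "is_ultrafilter U" and C: "U \<le> comeager"
  shows "ulim U \<in> QK"
proof -
  have Ub: "U \<noteq> bot" using U unfolding is_ultrafilter_def by blast
  have lim: "\<exists>c. (f \<longlongrightarrow> c) U" if "bdd_fun f" for f :: "'a \<Rightarrow> real"
    using ultra_tendsto[OF U that] .
  show ?thesis
    unfolding QK_def
  proof (intro CollectI conjI allI impI ballI)
    fix f g :: "'a \<Rightarrow> real" assume f: "bdd_fun f" and g: "bdd_fun g"
    obtain a b where a: "(f \<longlongrightarrow> a) U" and b: "(g \<longlongrightarrow> b) U" using lim f g by blast
    show "ulim U (\<lambda>x. f x + g x) = ulim U f + ulim U g"
      using ulim_eq[OF U bdd_add[OF f g] tendsto_add[OF a b]] ulim_eq[OF U f a] ulim_eq[OF U g b]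
      by simp
    show "ulim U (\<lambda>x. f x * g x) = ulim U f * ulim U g"
      using ulim_eq[OF U bdd_mult[OF f g] tendsto_mult[OF a b]] ulim_eq[OF U f a] ulim_eq[OF U g b]
      by simp
  next
    fix f :: "'a \<Rightarrow> real" and c :: real assume f: "bdd_fun f"
    obtain a where a: "(f \<longlongrightarrow> a) U" using lim f by blast
    show "ulim U (\<lambda>x. c * f x) = c * ulim U f"
      using ulim_eq[OF U bdd_scale[OF f] tendsto_mult[OF tendsto_const a]] ulim_eq[OF U f a]
      by simp
  next
    fix f :: "'a \<Rightarrow> real" assume "f \<in> mK"
    then have f: "bdd_fun f" and fc: "first_category (supp f)" unfolding mK_def by auto
    have "eventually (\<lambda>x. x \<notin> supp f) comeager" unfolding eventually_comeager using fc by simp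
    then have "eventually (\<lambda>x. x \<notin> supp f) U" by (rule filter_leD[OF C])
    then have "eventually (\<lambda>x. f x = 0) U" by (rule eventually_mono) (simp add: supp_def)
    then have "(f \<longlongrightarrow> 0) U" by (rule tendsto_eventually)
    then show "ulim U f = 0" using ulim_eq[OF U f] by simp
  next
    fix f :: "'a \<Rightarrow> real" assume "\<not> bdd_fun f"
    then show "ulim U f = 0" unfolding ulim_def by simp
  next
    have "ulim U (\<lambda>x. 1) = 1" using ulim_eq[OF U bdd_const tendsto_const] .
    then show "\<exists>f. bdd_fun f \<and> ulim U f \<noteq> 0" by (intro exI[of _ "\<lambda>x. 1"]) (simp add: bdd_const)
  qed
qed



lemma phi_add: "\<phi> \<in> QK \<Longrightarrow> bdd_fun f \<Longrightarrow> bdd_fun g \<Longrightarrow> \<phi> (\<lambda>x. f x + g x) = \<phi> f + \<phi> g"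
  unfolding QK_def by blast
lemma phi_scale: "\<phi> \<in> QK \<Longrightarrow> bdd_fun f \<Longrightarrow> \<phi> (\<lambda>x. c * f x) = c * \<phi> f"
  unfolding QK_def by blast
lemma phi_mult: "\<phi> \<in> QK \<Longrightarrow> bdd_fun f \<Longrightarrow> bdd_fun g \<Longrightarrow> \<phi> (\<lambda>x. f x * g x) = \<phi> f * \<phi> g"
  unfolding QK_def by blast
lemma phi_mK: "\<phi> \<in> QK \<Longrightarrow> f \<in> mK \<Longrightarrow> \<phi> f = 0"
  unfolding QK_def by blast

lemma phi_one:
  assumes "\<phi> \<in> QK" shows "\<phi> (\<lambda>x. 1) = 1"
proof -
  obtain f where f: "bdd_fun f" "\<phi> f \<noteq> 0" using assms unfolding QK_def by blast
  have "\<phi> (\<lambda>x. 1 * f x) = \<phi> (\<lambda>x. 1) * \<phi> f" by (rule phi_mult[OF assms bdd_const f(1)])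
  then have "\<phi> f = \<phi> (\<lambda>x. 1) * \<phi> f" by simp
  then show ?thesis using f(2) by simp
qed

lemma phi_const:
  assumes "\<phi> \<in> QK" shows "\<phi> (\<lambda>x. c) = c"
  using phi_scale[OF assms bdd_const[of 1], of c] phi_one[OF assms] by simp

lemma bdd_sum: "finite F \<Longrightarrow> (\<forall>f\<in>F. bdd_fun (h f)) \<Longrightarrow> bdd_fun (\<lambda>x. \<Sum>f\<in>F. h f x)"
proof (induction F rule: finite_induct)
  case empty then show ?case by (simp add: bdd_const)
next
  case (insert a F) then show ?case by (simp add: bdd_add)
qed

lemma phi_sum:
  assumes "\<phi> \<in> QK"
  shows "finite F \<Longrightarrow> (\<forall>f\<in>F. bdd_fun (h f)) \<Longrightarrow> \<phi> (\<lambda>x. \<Sum>f\<in>F. h f x) = (\<Sum>f\<in>F. \<phi> (h f))"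
proof (induction F rule: finite_induct)
  case empty then show ?case using phi_const[OF assms, of 0] by simp
next
  case (insert a F)
  have "\<phi> (\<lambda>x. \<Sum>f\<in>insert a F. h f x) = \<phi> (\<lambda>x. h a x + (\<Sum>f\<in>F. h f x))"
    using insert by simp
  also have "\<dots> = \<phi> (h a) + \<phi> (\<lambda>x. \<Sum>f\<in>F. h f x)"
    using insert by (intro phi_add[OF assms]) (auto intro: bdd_sum)
  finally show ?case using insert by simp
qed

lemma S_not_fc:
  fixes \<phi> :: "('a::topological_space \<Rightarrow> real) \<Rightarrow> real"
  assumes phi: "\<phi> \<in> QK" and F: "finite F" "\<forall>f\<in>F. bdd_fun f" and e: "e > 0"
  shows "\<not> first_category {x. \<forall>f\<in>F. \<bar>f x - \<phi> f\<bar> < e}"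
proof
  define S where "S = {x. \<forall>f\<in>F. \<bar>f x - \<phi> f\<bar> < e}"
  assume "first_category {x. \<forall>f\<in>F. \<bar>f x - \<phi> f\<bar> < e}"
  then have fcS: "first_category S" unfolding S_def .
  define h where "h f = (\<lambda>x. (f x - \<phi> f) * (f x - \<phi> f))" for f :: "'a \<Rightarrow> real"
  define g where "g = (\<lambda>x. \<Sum>f\<in>F. h f x)"
  have bddd: "bdd_fun (\<lambda>x. f x - \<phi> f)" if "f \<in> F" for f
    using bdd_add[OF _ bdd_const[of "- \<phi> f"], of f] F that by simp
  have phid: "\<phi> (\<lambda>x. f x - \<phi> f) = 0" if "f \<in> F" for f
    using phi_add[OF phi _ bdd_const[of "- \<phi> f"], of f] phi_const[OF phi, of "- \<phi> f"] F that by simp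
  have bddh: "bdd_fun (h f)" if "f \<in> F" for f
    unfolding h_def using bdd_mult[OF bddd bddd] that by simp
  have phih: "\<phi> (h f) = 0" if "f \<in> F" for f
    unfolding h_def using phi_mult[OF phi bddd bddd] phid that by simp
  have bddg: "bdd_fun g" unfolding g_def by (rule bdd_sum[OF F(1)]) (use bddh in blast)
  have phig: "\<phi> g = 0" unfolding g_def using phi_sum[OF phi F(1), of h] bddh phih by simp
  have gS: "g x \<ge> e * e / 4" if "x \<notin> S" for x
  proof -
    have "\<exists>f\<in>F. \<bar>f x - \<phi> f\<bar> \<ge> e" using that unfolding S_def by (auto simp: not_less)
    then obtain f where f: "f \<in> F" "\<bar>f x - \<phi> f\<bar> \<ge> e" by blast
    have "e * e \<le> \<bar>f x - \<phi> f\<bar> * \<bar>f x - \<phi> f\<bar>" using f e by (intro mult_mono) auto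
    also have "\<dots> = h f x" unfolding h_def by (simp add: abs_mult_self_eq)
    also have "\<dots> \<le> g x" unfolding g_def h_def
      using F(1) f(1) by (intro member_le_sum) auto
    moreover have "e * e / 4 \<le> e * e" using e by simp
    ultimately show ?thesis by linarith
  qed
  define ind where "ind = (\<lambda>x. if x \<in> S then 1 else (0::real))"
  define k where "k = (\<lambda>x. if x \<in> S then 0 else 1 / g x)"
  have bddind: "bdd_fun ind" unfolding bdd_fun_iff ind_def by (intro exI[of _ 1]) auto
  have "supp ind = S" unfolding supp_def ind_def by auto
  then have "ind \<in> mK" using bddind fcS unfolding mK_def by simp
  then have phiind: "\<phi> ind = 0" by (rule phi_mK[OF phi])
  have ee: "e * e / 4 > 0" using e by simp
  have bddk: "bdd_fun k" unfolding bdd_fun_iff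
  proof (intro exI allI)
    fix x show "\<bar>k x\<bar> \<le> 4 / (e * e)"
    proof (cases "x \<in> S")
      case True then show ?thesis unfolding k_def using e by simp
    next
      case False
      then have gx: "g x \<ge> e * e / 4" by (rule gS)
      then have "1 / g x \<le> 1 / (e * e / 4)" using ee by (intro divide_left_mono) auto
      then show ?thesis unfolding k_def using False gx ee by simp
    qed
  qed
  have kg: "(\<lambda>x. k x * g x) = (\<lambda>x. 1 + (-1) * ind x)"
  proof
    fix x show "k x * g x = 1 + (-1) * ind x"
    proof (cases "x \<in> S")
      case True then show ?thesis unfolding k_def ind_def by simp
    next
      case False
      then have "g x > 0" using gS[of x] ee by linarith
      then show ?thesis using False unfolding k_def ind_def by simp
    qed
  qed
  have "\<phi> (\<lambda>x. k x * g x) = 0" using phi_mult[OF phi bddk bddg] phig by simp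
  moreover have "\<phi> (\<lambda>x. 1 + (-1) * ind x) = 1"
    using phi_add[OF phi bdd_const bdd_scale[OF bddind, of "-1"]] phi_scale[OF phi bddind, of "-1"]
      phi_one[OF phi] phiind by simp
  ultimately show False using kg by simp
qed

theorem mainTheorem7:
  fixes U :: "(('a::t2_space \<Rightarrow> real) \<Rightarrow> real) set"
  assumes "compact (UNIV :: 'a set)"
    and "\<forall>x::'a. \<not> open {x}"
    and "QK_open U" and "U \<noteq> {}"
  shows "\<exists>V :: 'a set. open V \<and> V \<noteq> {} \<and>
           (\<forall>v\<in>V. \<exists>F. is_ultrafilter F \<and>
               (\<forall>A. first_category A \<longrightarrow> \<not> eventually (\<lambda>x. x \<in> A) F) \<and>
               F \<le> nhds v \<and> ulim F \<in> U)"
proof -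
  obtain \<phi> where phiU: "\<phi> \<in> U" using assms(4) by blast
  have phi: "\<phi> \<in> QK" using assms(3) phiU unfolding QK_open_def by blast
  obtain Fs \<epsilon> where Fs: "finite Fs" "\<forall>f\<in>Fs. bdd_fun f" and eps: "\<epsilon> > 0"
    and WU: "{\<psi>\<in>QK. \<forall>f\<in>Fs. \<bar>\<psi> f - \<phi> f\<bar> < \<epsilon>} \<subseteq> U"
    using assms(3) phiU unfolding QK_open_def by blast
  define S :: "'a set" where "S = {x. \<forall>f\<in>Fs. \<bar>f x - \<phi> f\<bar> < \<epsilon> / 2}"
  have nfc: "\<not> first_category S" unfolding S_def using S_not_fc[OF phi Fs, of "\<epsilon> / 2"] eps by simp
  obtain V where V: "open V" "V \<noteq> {}"
    and HV: "\<And>W. open W \<Longrightarrow> W \<noteq> {} \<Longrightarrow> W \<subseteq> V \<Longrightarrow> \<not> first_category (S \<inter> W)"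
    using banach[of S] nfc by blast
  show ?thesis
  proof (intro exI[of _ V] conjI ballI)
    show "open V" "V \<noteq> {}" by fact+
    fix v assume v: "v \<in> V"
    define F0 where "F0 = inf (nhds v) (inf (principal S) comeager)"
    have "F0 \<noteq> bot"
    proof
      assume "F0 = bot"
      then have "eventually (\<lambda>x. False) F0" by simp
      then obtain Q1 R where Q1: "eventually Q1 (nhds v)" and R: "eventually R (inf (principal S) comeager)"
        and QR: "\<forall>x. Q1 x \<and> R x \<longrightarrow> False"
        unfolding F0_def eventually_inf by blast
      obtain Q2 Q3 where Q2: "eventually Q2 (principal S)" and Q3: "eventually Q3 comeager"
        and Q23: "\<forall>x. Q2 x \<and> Q3 x \<longrightarrow> R x"
        using R unfolding eventually_inf by blast
      obtain W where W: "open W" "v \<in> W" "\<forall>x\<in>W. Q1 x" using Q1 unfolding eventually_nhds by blast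
      have "S \<inter> (W \<inter> V) \<subseteq> {x. \<not> Q3 x}"
        using W Q2 Q23 QR unfolding eventually_principal by blast
      moreover have "first_category {x. \<not> Q3 x}" using Q3 unfolding eventually_comeager .
      ultimately have "first_category (S \<inter> (W \<inter> V))" by (rule fc_subset[rotated])
      moreover have "open (W \<inter> V)" "W \<inter> V \<noteq> {}" "W \<inter> V \<subseteq> V" using W V v by auto
      ultimately show False using HV by blast
    qed
    then obtain Uf where Uf: "Uf \<le> F0" "is_ultrafilter Uf" using ex_ultra by blast
    have Ub: "Uf \<noteq> bot" using Uf unfolding is_ultrafilter_def by blast
    have Un: "Uf \<le> nhds v" and UpS: "Uf \<le> principal S" and Uc: "Uf \<le> comeager"
    proof -
      have "F0 \<le> nhds v" "F0 \<le> principal S" "F0 \<le> comeager" unfolding F0_def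
        by (rule inf_le1, rule le_infI2[OF inf_le1], rule le_infI2[OF inf_le2])
      then show "Uf \<le> nhds v" "Uf \<le> principal S" "Uf \<le> comeager"
        using order_trans[OF Uf(1)] by blast+
    qed
    have "\<forall>A. first_category A \<longrightarrow> \<not> eventually (\<lambda>x. x \<in> A) Uf"
    proof (intro allI impI notI)
      fix A :: "'a set" assume fA: "first_category A" and eA: "eventually (\<lambda>x. x \<in> A) Uf"
      have "eventually (\<lambda>x. x \<notin> A) comeager" unfolding eventually_comeager
        using fA by simp
      then have nA: "eventually (\<lambda>x. x \<notin> A) Uf" by (rule filter_leD[OF Uc])
      have "eventually (\<lambda>x. x \<in> A \<and> x \<notin> A) Uf" by (rule eventually_conj[OF eA nA])
      then have "eventually (\<lambda>x. False) Uf" by (rule eventually_mono) simp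
      then show False using Ub by simp
    qed
    have QKu: "ulim Uf \<in> QK" by (rule ulim_QK[OF Uf(2) Uc])
    have eS: "eventually (\<lambda>x. x \<in> S) Uf" using UpS by (simp add: le_principal)
    have "\<bar>ulim Uf f - \<phi> f\<bar> < \<epsilon>" if f: "f \<in> Fs" for f
    proof -
      have bf: "bdd_fun f" using Fs f by blast
      obtain c where c: "(f \<longlongrightarrow> c) Uf" using ultra_tendsto[OF Uf(2) bf] by blast
      have uc: "ulim Uf f = c" by (rule ulim_eq[OF Uf(2) bf c])
      have "((\<lambda>x. \<bar>f x - \<phi> f\<bar>) \<longlongrightarrow> \<bar>c - \<phi> f\<bar>) Uf" by (intro tendsto_intros c)
      moreover have "eventually (\<lambda>x. \<bar>f x - \<phi> f\<bar> \<le> \<epsilon> / 2) Uf"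
        using eS by (rule eventually_mono) (use f in \<open>auto simp: S_def intro: less_imp_le\<close>)
      ultimately have "\<bar>c - \<phi> f\<bar> \<le> \<epsilon> / 2" using Ub by (intro tendsto_upperbound)
      then show ?thesis using uc eps by simp
    qed
    then have "ulim Uf \<in> U" using WU QKu by blast
    then show "\<exists>F. is_ultrafilter F \<and>
               (\<forall>A. first_category A \<longrightarrow> \<not> eventually (\<lambda>x. x \<in> A) F) \<and>
               F \<le> nhds v \<and> ulim F \<in> U"
      using Uf(2) Un \<open>\<forall>A. first_category A \<longrightarrow> \<not> eventually (\<lambda>x. x \<in> A) Uf\<close> by blast
  qed
qed

end
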